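(* For every fixed $n\ge1$, the function $\omega_n(s)=f_n(s)/g_n(s)$ is continuous and strictly increasing on $[0,1]$ (with the values at the endpoints understood by continuity), and consequently $$f_n(s)\ge\frac{n+1}{2}\,g_n(s)\qquad\text{for all } s\in(1/2,1).$$
   Context: $g_1(s)=s$, $g_n(s)=\frac{s g_{n-1}(s)}{1-s+ng_{n-1}(s)}$ for $n\ge2$; $f_1(s)=s$, $f_{k+1}(s)=\frac{s f_k(s)}{1-s+f_k(s)}$ for $k\ge1$; all defined for $s\in[0,1]$. *)

theory Defs
  imports Complex_Main
begin

text \<open>g_1(s) = s, g_n(s) = s g_{n-1}(s) / (1 - s + n g_{n-1}(s)) for n >= 2.
  The value at index 0 is an unused junk value.\<close>
fun gseq :: "nat \<Rightarrow> real \<Rightarrow> real" where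
  "gseq 0 s = s"
| "gseq (Suc 0) s = s"
| "gseq (Suc (Suc m)) s =
     s * gseq (Suc m) s / (1 - s + real (Suc (Suc m)) * gseq (Suc m) s)"

fun fseq :: "nat \<Rightarrow> real \<Rightarrow> real" where
  "fseq 0 s = s"
| "fseq (Suc 0) s = s"
| "fseq (Suc (Suc k)) s = s * fseq (Suc k) s / (1 - s + fseq (Suc k) s)"

end

theory Submission
  imports Defs
begin

fun PP :: "nat \<Rightarrow> real \<Rightarrow> real" where
  "PP 0 s = 0"
| "PP (Suc n) s = (1 - s) * PP n s + s ^ n"

fun QQ :: "nat \<Rightarrow> real \<Rightarrow> real" where
  "QQ 0 s = 0"
| "QQ (Suc n) s = (1 - s) * QQ n s + real (Suc n) * s ^ n"

definition EE :: "nat \<Rightarrow> real \<Rightarrow> real" where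
  "EE n s = real (Suc n) * PP n s - QQ n s"

lemma EE_rec: "EE (Suc n) s = (1 - s) * (EE n s + PP n s) + s ^ n"
  unfolding EE_def by (simp add: algebra_simps)

lemma EE_0: "EE 0 s = 0" by (simp add: EE_def)

lemma PP_nonneg: "0 \<le> s \<Longrightarrow> s \<le> 1 \<Longrightarrow> 0 \<le> PP n s"
  by (induction n) auto

lemma PP_pos: "0 \<le> s \<Longrightarrow> s \<le> 1 \<Longrightarrow> n \<ge> 1 \<Longrightarrow> 0 < PP n s"
proof (induction n)
  case (Suc n)
  show ?case
  proof (cases "s = 1")
    case True then show ?thesis by simp
  next
    case False
    then have s1: "1 - s > 0" using Suc by simp
    show ?thesis
    proof (cases n)
      case 0 then show ?thesis by simp
    next
      case (Suc k)
      then have "PP n s > 0" using Suc.IH \<open>0 \<le> s\<close> \<open>s \<le> 1\<close> by simp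
      then have "(1 - s) * PP n s > 0" using s1 by simp
      moreover have "s ^ n \<ge> 0" using \<open>0 \<le> s\<close> by simp
      ultimately show ?thesis by simp
    qed
  qed
qed simp

lemma QQ_nonneg: "0 \<le> s \<Longrightarrow> s \<le> 1 \<Longrightarrow> 0 \<le> QQ n s"
  by (induction n) auto

lemma EE_nonneg: "0 \<le> s \<Longrightarrow> s \<le> 1 \<Longrightarrow> 0 \<le> EE n s"
  by (induction n) (auto simp: EE_rec EE_0 PP_nonneg)

lemma EE_pos: "0 \<le> s \<Longrightarrow> s < 1 \<Longrightarrow> n \<ge> 1 \<Longrightarrow> 0 < EE n s"
proof (induction n)
  case (Suc n)
  show ?case
  proof (cases n)
    case 0 then show ?thesis by (simp add: EE_rec EE_0)
  next
    case (Suc m)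
    then have "EE n s + PP n s > 0"
      using \<open>0 \<le> s\<close> \<open>s < 1\<close> PP_pos[of s n] EE_nonneg[of s n] by auto
    then have "(1 - s) * (EE n s + PP n s) > 0" using \<open>s < 1\<close> by simp
    then show ?thesis using \<open>0 \<le> s\<close> by (simp add: EE_rec add_pos_nonneg)
  qed
qed simp

lemma K_ineq:
  assumes "0 \<le> x" "x \<le> y" "y \<le> 1"
  shows "x ^ n * PP n y \<le> y ^ n * PP n x"
proof (induction n)
  case (Suc n)
  have xy: "x * (1 - y) \<le> y * (1 - x)" using assms by (simp add: algebra_simps)
  have a: "(x * (1 - y)) * (x ^ n * PP n y) \<le> (y * (1 - x)) * (y ^ n * PP n x)"
    apply (rule mult_mono[OF xy Suc])
    using assms Suc PP_nonneg[of y n] by auto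
  have b: "x ^ n * y ^ n * x \<le> x ^ n * y ^ n * y"
    using assms by (simp add: mult_left_mono)
  have "x ^ Suc n * PP (Suc n) y = (x * (1 - y)) * (x ^ n * PP n y) + x ^ n * y ^ n * x"
    by (simp add: algebra_simps)
  also have "\<dots> \<le> (y * (1 - x)) * (y ^ n * PP n x) + x ^ n * y ^ n * y"
    using a b by linarith
  also have "\<dots> = y ^ Suc n * PP (Suc n) x" by (simp add: algebra_simps)
  finally show ?case .
qed simp

lemma H_ineq:
  assumes "0 \<le> x" "x \<le> y" "y \<le> 1"
  shows "x ^ n * (1 - y) * EE n y \<le> y ^ n * (1 - x) * EE n x"
proof (induction n)
  case 0 then show ?case by (simp add: EE_0)
next
  case (Suc n)
  have xy: "x * (1 - y) \<le> y * (1 - x)" using assms by (simp add: algebra_simps)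
  have a: "(x * (1 - y)) * (x ^ n * (1 - y) * EE n y) \<le> (y * (1 - x)) * (y ^ n * (1 - x) * EE n x)"
    apply (rule mult_mono[OF xy Suc])
    using assms EE_nonneg[of y n] by auto
  have sq: "(1 - y)^2 \<le> (1 - x)^2" using assms by (intro power_mono) auto
  have b0: "x * (1 - y)^2 \<le> y * (1 - x)^2"
    apply (rule mult_mono) using assms sq by auto
  have b: "(x * (1 - y)^2) * (x ^ n * PP n y) \<le> (y * (1 - x)^2) * (y ^ n * PP n x)"
    apply (rule mult_mono[OF b0 K_ineq[OF assms]])
    using assms PP_nonneg[of y n] by auto
  have c: "(x ^ n * y ^ n) * (x * (1 - y)) \<le> (x ^ n * y ^ n) * (y * (1 - x))"
    using assms xy by (simp add: mult_left_mono)
  have "x ^ Suc n * (1 - y) * EE (Suc n) y =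
     (x * (1 - y)) * (x ^ n * (1 - y) * EE n y) + (x * (1 - y)^2) * (x ^ n * PP n y)
     + (x ^ n * y ^ n) * (x * (1 - y))"
    by (simp add: EE_rec algebra_simps power2_eq_square)
  also have "\<dots> \<le> (y * (1 - x)) * (y ^ n * (1 - x) * EE n x) + (y * (1 - x)^2) * (y ^ n * PP n x)
     + (x ^ n * y ^ n) * (y * (1 - x))"
    using a b c by linarith
  also have "\<dots> = y ^ Suc n * (1 - x) * EE (Suc n) x"
    by (simp add: EE_rec algebra_simps power2_eq_square)
  finally show ?case .
qed

lemma D_rec:
  "QQ (Suc n) y * PP (Suc n) x - QQ (Suc n) x * PP (Suc n) y =
   (1 - x) * (1 - y) * (QQ n y * PP n x - QQ n x * PP n y)
   + (y ^ n * (1 - x) * EE n x - x ^ n * (1 - y) * EE n y)"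
  by (simp add: EE_def algebra_simps)

lemma D_ineq:
  assumes "0 \<le> x" "x \<le> y" "y \<le> 1"
  shows "QQ n x * PP n y \<le> QQ n y * PP n x"
proof (induction n)
  case (Suc n)
  have "0 \<le> (1 - x) * (1 - y) * (QQ n y * PP n x - QQ n x * PP n y)"
    using Suc assms by auto
  moreover have "0 \<le> y ^ n * (1 - x) * EE n x - x ^ n * (1 - y) * EE n y"
    using H_ineq[OF assms] by simp
  ultimately show ?case using D_rec[of n y x] by linarith
qed simp

lemma D_strict:
  assumes "0 \<le> x" "x < y" "y \<le> 1" "n \<ge> 2"
  shows "QQ n x * PP n y < QQ n y * PP n x"
  using assms(4)
proof (induction n rule: dec_induct)
  case base
  then show ?case using assms by (simp add: numeral_2_eq_2 algebra_simps)
next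
  case (step n)
  have H: "0 \<le> y ^ n * (1 - x) * EE n x - x ^ n * (1 - y) * EE n y"
    using H_ineq[of x y n] assms by simp
  show ?case
  proof (cases "y = 1")
    case True
    have "0 < y ^ n * (1 - x) * EE n x - x ^ n * (1 - y) * EE n y"
      using True assms EE_pos[of x n] step by simp
    moreover have "0 \<le> (1 - x) * (1 - y) * (QQ n y * PP n x - QQ n x * PP n y)"
      using D_ineq[of x y n] assms by auto
    ultimately show ?thesis using D_rec[of n y x] by linarith
  next
    case False
    have "0 < (1 - x) * (1 - y) * (QQ n y * PP n x - QQ n x * PP n y)"
      using False assms step by auto
    then show ?thesis using D_rec[of n y x] H by linarith
  qed
qed

lemma step_alg:
  fixes s A P c :: real
  assumes "P > 0" "(1 - s) * P + c * A \<noteq> 0"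
  shows "s * (A / P) / (1 - s + c * (A / P)) = s * A / ((1 - s) * P + c * A)"
proof -
  have "1 - s + c * (A / P) = ((1 - s) * P + c * A) / P" using assms by (simp add: field_simps)
  then show ?thesis using assms by simp
qed

lemma QQ_pos: "0 < s \<Longrightarrow> s \<le> 1 \<Longrightarrow> n \<ge> 1 \<Longrightarrow> 0 < QQ n s"
proof (cases n)
  case (Suc m)
  assume a: "0 < s" "s \<le> 1"
  have "QQ (Suc m) s \<ge> real (Suc m) * s ^ m"
    using QQ_nonneg[of s m] a by simp
  moreover have "real (Suc m) * s ^ m > 0" using a by simp
  ultimately have "0 < QQ (Suc m) s" by linarith
  then show ?thesis using Suc by simp
qed simp

lemma f_closed: "0 < s \<Longrightarrow> s \<le> 1 \<Longrightarrow> fseq (Suc m) s = s ^ Suc m / PP (Suc m) s"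
proof (induction m)
  case 0 then show ?case by simp
next
  case (Suc m)
  have P: "PP (Suc m) s > 0" using PP_pos[of s "Suc m"] Suc.prems by simp
  have P2: "PP (Suc (Suc m)) s > 0" using PP_pos[of s "Suc (Suc m)"] Suc.prems by simp
  have "fseq (Suc (Suc m)) s = s * (s ^ Suc m / PP (Suc m) s) / (1 - s + 1 * (s ^ Suc m / PP (Suc m) s))"
    using Suc by simp
  also have "\<dots> = s * s ^ Suc m / ((1 - s) * PP (Suc m) s + 1 * s ^ Suc m)"
    by (rule step_alg) (use P P2 in auto)
  also have "\<dots> = s ^ Suc (Suc m) / PP (Suc (Suc m)) s" by simp
  finally show ?case .
qed

lemma g_closed: "0 < s \<Longrightarrow> s \<le> 1 \<Longrightarrow> gseq (Suc m) s = s ^ Suc m / QQ (Suc m) s"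
proof (induction m)
  case 0 then show ?case by simp
next
  case (Suc m)
  have P: "QQ (Suc m) s > 0" using QQ_pos[of s "Suc m"] Suc.prems by simp
  have P2: "QQ (Suc (Suc m)) s > 0" using QQ_pos[of s "Suc (Suc m)"] Suc.prems by simp
  have "gseq (Suc (Suc m)) s = s * (s ^ Suc m / QQ (Suc m) s) /
      (1 - s + real (Suc (Suc m)) * (s ^ Suc m / QQ (Suc m) s))"
    using Suc by simp
  also have "\<dots> = s * s ^ Suc m / ((1 - s) * QQ (Suc m) s + real (Suc (Suc m)) * s ^ Suc m)"
    by (rule step_alg) (use P P2 in auto)
  also have "\<dots> = s ^ Suc (Suc m) / QQ (Suc (Suc m)) s" by simp
  finally show ?case .
qed

lemma PP_cont: "continuous_on A (PP n)"
  by (induction n) (auto intro!: continuous_intros)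

lemma QQ_cont: "continuous_on A (QQ n)"
  by (induction n) (auto intro!: continuous_intros)

lemma half_pow: "(1/2::real) ^ n * 2 ^ n = 1"
  by (simp add: power_one_over)

lemma half_vals: "PP n (1/2) * 2 ^ n = 2 * n \<and> QQ n (1/2) * 2 ^ n = n * (n + 1)"
proof (induction n)
  case (Suc n)
  have "PP (Suc n) (1/2) * 2 ^ Suc n = PP n (1/2) * 2 ^ n + 2 * ((1/2) ^ n * 2 ^ n)"
    by (simp add: algebra_simps)
  moreover have "QQ (Suc n) (1/2) * 2 ^ Suc n = QQ n (1/2) * 2 ^ n + 2 * (n + 1) * ((1/2) ^ n * 2 ^ n)"
    by (simp add: algebra_simps)
  ultimately show ?case using Suc by (simp only: half_pow) (simp add: algebra_simps)
qed simp

theorem mainTheorem11: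
  fixes n :: nat
  assumes "n \<ge> 1"
  shows "(\<exists>\<omega> :: real \<Rightarrow> real.
            continuous_on {0..1} \<omega>
          \<and> (\<forall>s\<in>{0<..1}. \<omega> s = fseq n s / gseq n s)
          \<and> (n \<ge> 2 \<longrightarrow> strict_mono_on {0..1} \<omega>))
       \<and> (\<forall>s\<in>{1/2<..<1}. fseq n s \<ge> (real n + 1) / 2 * gseq n s)"
proof -
  obtain m where m: "n = Suc m" using assms by (cases n) auto
  have fg: "fseq n s / gseq n s = QQ n s / PP n s" if "0 < s" "s \<le> 1" for s
  proof -
    have "PP n s > 0" using PP_pos[of s n] that assms by simp
    moreover have "s ^ n > 0" using that by simp
    moreover have "QQ n s > 0" using QQ_pos[of s n] that assms by simp
    moreover have "fseq n s / gseq n s = (s ^ n / PP n s) / (s ^ n / QQ n s)"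
      using f_closed[OF that, of m] g_closed[OF that, of m] m by simp
    ultimately show ?thesis using that by (simp del: PP.simps QQ.simps)
  qed
  have part1: "\<exists>\<omega> :: real \<Rightarrow> real.
            continuous_on {0..1} \<omega>
          \<and> (\<forall>s\<in>{0<..1}. \<omega> s = fseq n s / gseq n s)
          \<and> (n \<ge> 2 \<longrightarrow> strict_mono_on {0..1} \<omega>)"
  proof (intro exI[of _ "\<lambda>s. QQ n s / PP n s"] conjI impI ballI)
    show "continuous_on {0..1} (\<lambda>s. QQ n s / PP n s)"
      using PP_pos[of _ n] assms by (auto intro!: continuous_intros PP_cont QQ_cont) (metis less_irrefl)
  next
    fix s :: real assume "s \<in> {0<..1}"
    then show "QQ n s / PP n s = fseq n s / gseq n s" using fg by simp
  next
    assume n2: "n \<ge> 2"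
    show "strict_mono_on {0..1} (\<lambda>s. QQ n s / PP n s)"
    proof (rule strict_mono_onI)
      fix x y :: real assume "x \<in> {0..1}" "y \<in> {0..1}" "x < y"
      then have "QQ n x * PP n y < QQ n y * PP n x" "PP n x > 0" "PP n y > 0"
        using D_strict[of x y n] n2 PP_pos[of x n] PP_pos[of y n] assms by auto
      then show "QQ n x / PP n x < QQ n y / PP n y" by (simp add: field_simps)
    qed
  qed
  have part2: "fseq n s \<ge> (real n + 1) / 2 * gseq n s" if s: "s \<in> {1/2<..<1}" for s
  proof -
    have hv: "PP n (1/2) * 2 ^ n = 2 * n" "QQ n (1/2) * 2 ^ n = n * (n + 1)"
      using half_vals[of n] by auto
    have D: "QQ n (1/2) * PP n s \<le> QQ n s * PP n (1/2)"
      using D_ineq[of "1/2" s n] s by auto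
    have ph: "PP n (1/2) > 0" using PP_pos[of "1/2" n] assms by simp
    have hq: "QQ n (1/2) = (real n + 1) / 2 * PP n (1/2)"
    proof -
      have "QQ n (1/2) * 2 ^ n = (real n + 1) / 2 * PP n (1/2) * 2 ^ n"
        using hv by (simp add: algebra_simps)
      then show ?thesis by simp
    qed
    have ps: "PP n s > 0" using PP_pos[of s n] assms s by simp
    have "(real n + 1) / 2 * PP n s \<le> QQ n s"
      using D ph unfolding hq by (simp add: mult.assoc mult.left_commute[of "PP n (1/2)"])
    have qs: "QQ n s > 0"
    proof -
      have "(real n + 1) / 2 * PP n s > 0" using ps by simp
      then show ?thesis using \<open>(real n + 1) / 2 * PP n s \<le> QQ n s\<close> by linarith
    qed
    have "(real n + 1) / 2 * (s ^ n / QQ n s) \<le> s ^ n / PP n s"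
    proof -
      have sn: "s ^ n \<ge> 0" using s by simp
      have "s ^ n * ((real n + 1) / 2 * PP n s) \<le> s ^ n * QQ n s"
        by (rule mult_left_mono[OF \<open>(real n + 1) / 2 * PP n s \<le> QQ n s\<close> sn])
      then show ?thesis using ps qs by (simp add: field_simps)
    qed
    then show ?thesis using f_closed[of s m] g_closed[of s m] s m by simp
  qed
  show ?thesis using part1 part2 by blast
qed

end
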